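(* Let $(\pi_k)_{k=0}^K$ be deterministic policies on an MDP as in the context, with $q^{\pi'_k}$, $v^{\pi'_k}$, $\sigma_k^2$ and $\Sigma_k^2$ defined in the context. Then for every $k\in\{1,\dots,K\}$, $$\Sigma_k^2 = \gamma^2\sigma_k^2 + \gamma^2P^{\pi_{k-1}}\Sigma_{k-1}^2.$$
   Context: MDP: finite state set $\mathcal{X}$, finite action set $\mathcal{A}$, discount $\gamma\in[0,1)$, reward $r\in[-1,1]^{\mathcal{X}\times\mathcal{A}}$, transition kernel $P(y|x,a)$. $(Pv)(x,a)=\sum_yP(y|x,a)v(y)$; for a policy $\pi$, $(\pi q)(x)=\sum_a\pi(a|x)q(x,a)$ and $(P^\pi q)(x,a) = (P\pi q)(x,a)$; $q^\pi$ is the unique fixed point of $q\mapsto r+\gamma P^\pi q$, $v^\pi=\pi q^\pi$. Definitions: $q^{\pi'_0}:=q^{\pi_0}$; $v^{\pi'_k} := \pi_kq^{\pi'_k}$; $q^{\pi'_k}:=r+\gamma Pv^{\pi'_{k-1}}$ for $k\in[K]$. $\sigma_0^2 := P(v^{\pi_0})^2-(Pv^{\pi_0})^2$ and $\sigma_k^2 := P(v^{\pi'_{k-1}})^2 - (Pv^{\pi'_{k-1}})^2$ for $k\in[K]$. For $k\in\{0,\dots,K\}$ and $(x,a)$, let $(X_t,A_t)_{t\ge0}$ be the process with $X_0=x$, $A_0=a$, $X_{t+1}\sim P(\cdot|X_t,A_t)$, $A_t = \pi_{k-t}(X_t)$ for $1\le t\le k$ and $A_t=\pi_0(X_t)$ for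 $t>k$, and define $\Sigma_k^2(x,a) := \mathbb{E}\big[(\sum_{t=0}^\infty\gamma^t r(X_t,A_t) - q^{\pi'_k}(x,a))^2\big]$. *)

theory Defs
  imports "HOL-Probability.Probability"
begin

text \<open>Finite MDP: states of finite type 'x, actions of finite type 'a,
  transition kernel P x a (a pmf on next states), reward r, discount g.
  Deterministic policies are functions 'x \<Rightarrow> 'a; a sequence of them is
  indexed by nat (only indices 0..K matter).\<close>

definition Pop :: "('x::finite \<Rightarrow> 'a \<Rightarrow> 'x pmf) \<Rightarrow> ('x \<Rightarrow> real) \<Rightarrow> 'x \<Rightarrow> 'a \<Rightarrow> real" where
  "Pop P v x a = (\<Sum>y\<in>UNIV. pmf (P x a) y * v y)"

definition polv :: "('x \<Rightarrow> 'a) \<Rightarrow> ('x \<Rightarrow> 'a \<Rightarrow> real) \<Rightarrow> 'x \<Rightarrow> real" where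
  "polv pol q x = q x (pol x)"

definition Ppol :: "('x::finite \<Rightarrow> 'a \<Rightarrow> 'x pmf) \<Rightarrow> ('x \<Rightarrow> 'a) \<Rightarrow> ('x \<Rightarrow> 'a \<Rightarrow> real) \<Rightarrow> 'x \<Rightarrow> 'a \<Rightarrow> real" where
  "Ppol P pol q = Pop P (polv pol q)"

definition qpi :: "('x::finite \<Rightarrow> 'a \<Rightarrow> 'x pmf) \<Rightarrow> ('x \<Rightarrow> 'a \<Rightarrow> real) \<Rightarrow> real \<Rightarrow> ('x \<Rightarrow> 'a) \<Rightarrow> 'x \<Rightarrow> 'a \<Rightarrow> real" where
  "qpi P r g pol = (THE q. \<forall>x a. q x a = r x a + g * Ppol P pol q x a)"

fun qprime :: "('x::finite \<Rightarrow> 'a \<Rightarrow> 'x pmf) \<Rightarrow> ('x \<Rightarrow> 'a \<Rightarrow> real) \<Rightarrow> real \<Rightarrow> (nat \<Rightarrow> 'x \<Rightarrow> 'a) \<Rightarrow> nat \<Rightarrow> 'x \<Rightarrow> 'a \<Rightarrow> real" where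
  "qprime P r g pols 0 = qpi P r g (pols 0)"
| "qprime P r g pols (Suc k) =
     (\<lambda>x a. r x a + g * Pop P (polv (pols k) (qprime P r g pols k)) x a)"

definition vprime :: "('x::finite \<Rightarrow> 'a \<Rightarrow> 'x pmf) \<Rightarrow> ('x \<Rightarrow> 'a \<Rightarrow> real) \<Rightarrow> real \<Rightarrow> (nat \<Rightarrow> 'x \<Rightarrow> 'a) \<Rightarrow> nat \<Rightarrow> 'x \<Rightarrow> real" where
  "vprime P r g pols k = polv (pols k) (qprime P r g pols k)"

definition sigma2 :: "('x::finite \<Rightarrow> 'a \<Rightarrow> 'x pmf) \<Rightarrow> ('x \<Rightarrow> 'a \<Rightarrow> real) \<Rightarrow> real \<Rightarrow> (nat \<Rightarrow> 'x \<Rightarrow> 'a) \<Rightarrow> nat \<Rightarrow> 'x \<Rightarrow> 'a \<Rightarrow> real" where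
  "sigma2 P r g pols k =
     (let v = (if k = 0 then polv (pols 0) (qpi P r g (pols 0)) else vprime P r g pols (k - 1))
      in (\<lambda>x a. Pop P (\<lambda>y. (v y)\<^sup>2) x a - (Pop P v x a)\<^sup>2))"

text \<open>Probability space for the process: at every time t an independent
  random "transition table" w t :: 'x \<times> 'a \<Rightarrow> 'x is drawn with
  w t (x,a) ~ P(.|x,a) independently over (x,a). Then X_{t+1} = w t (X_t, A_t)
  has exactly the Markov law X_{t+1} ~ P(.|X_t,A_t).\<close>
definition table_pmf :: "('x::finite \<Rightarrow> 'a::finite \<Rightarrow> 'x pmf) \<Rightarrow> ('x \<times> 'a \<Rightarrow> 'x) pmf" where
  "table_pmf P = Pi_pmf UNIV undefined (\<lambda>(x, a). P x a)"

definition path_space :: "('x::finite \<Rightarrow> 'a::finite \<Rightarrow> 'x pmf) \<Rightarrow> (nat \<Rightarrow> ('x \<times> 'a \<Rightarrow> 'x)) measure" where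
  "path_space P = PiM UNIV (\<lambda>_. measure_pmf (table_pmf P))"

definition act :: "(nat \<Rightarrow> 'x \<Rightarrow> 'a) \<Rightarrow> nat \<Rightarrow> nat \<Rightarrow> 'x \<Rightarrow> 'a" where
  "act pols k t y = (if t \<le> k then pols (k - t) y else pols 0 y)"

fun traj :: "(nat \<Rightarrow> 'x \<Rightarrow> 'a) \<Rightarrow> nat \<Rightarrow> 'x \<Rightarrow> 'a \<Rightarrow> (nat \<Rightarrow> ('x \<times> 'a \<Rightarrow> 'x)) \<Rightarrow> nat \<Rightarrow> 'x \<times> 'a" where
  "traj pols k x a w 0 = (x, a)"
| "traj pols k x a w (Suc t) =
     (let y = w t (traj pols k x a w t) in (y, act pols k (Suc t) y))"

definition Sigma2 :: "('x::finite \<Rightarrow> 'a::finite \<Rightarrow> 'x pmf) \<Rightarrow> ('x \<Rightarrow> 'a \<Rightarrow> real) \<Rightarrow> real \<Rightarrow> (nat \<Rightarrow> 'x \<Rightarrow> 'a) \<Rightarrow> nat \<Rightarrow> 'x \<Rightarrow> 'a \<Rightarrow> real" where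
  "Sigma2 P r g pols k x a =
     (\<integral>w. ((\<Sum>t. g ^ t * case_prod r (traj pols k x a w t)) - qprime P r g pols k x a)\<^sup>2 \<partial>path_space P)"

end

theory Submission
  imports Defs
begin

abbreviation TT :: "('x::finite \<Rightarrow> 'a::finite \<Rightarrow> 'x pmf) \<Rightarrow> ('x \<times> 'a \<Rightarrow> 'x) measure" where
  "TT P \<equiv> measure_pmf (table_pmf P)"

lemma seqsp: "sequence_space (TT P)"
  unfolding sequence_space_def product_prob_space_def product_sigma_finite_def product_prob_space_axioms_def
  by (auto intro: measure_pmf.prob_space_axioms prob_space_imp_sigma_finite)

lemma shift_meas: "(\<lambda>w t. w (Suc t)) \<in> measurable (path_space P) (path_space P)"
  unfolding path_space_def
  by (rule measurable_PiM_single') (auto simp: space_PiM)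

lemma comp0_meas: "(\<lambda>w. w i) \<in> measurable (path_space P) (count_space UNIV)"
proof -
  have "(\<lambda>w. w i) \<in> measurable (path_space P) (TT P)"
    unfolding path_space_def by measurable
  then show ?thesis by simp
qed

lemma split_int:
  fixes G :: "('x::finite \<times> 'a::finite \<Rightarrow> 'x) \<Rightarrow> (nat \<Rightarrow> ('x \<times> 'a \<Rightarrow> 'x)) \<Rightarrow> real"
  assumes meas: "\<And>u. G u \<in> borel_measurable (path_space P)"
    and bnd: "\<And>u w. \<bar>G u w\<bar> \<le> B"
  shows "(\<integral>w. G (w 0) (\<lambda>t. w (Suc t)) \<partial>path_space P) = (\<integral>u. (\<integral>w. G u w \<partial>path_space P) \<partial>TT P)"
proof -
  interpret S: sequence_space "TT P" by (rule seqsp)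
  have PS: "path_space P = S.S" unfolding path_space_def by simp
  interpret SS: pair_sigma_finite S.S S.S
    by (simp add: pair_sigma_finite_def S.P.sigma_finite_measure_axioms)
  interpret SSp: prob_space "S.S \<Otimes>\<^sub>M S.S"
    by (simp add: S.P.prob_space_axioms prob_space_pair)
  have m1: "(\<lambda>w. G (w 0) (\<lambda>t. w (Suc t))) \<in> borel_measurable S.S"
    apply (rule measurable_compose_countable[where f="\<lambda>u w. G u (\<lambda>t. w (Suc t))"])
    subgoal for u using measurable_compose[OF shift_meas[of P] meas[of u]] unfolding PS by simp
    subgoal using comp0_meas[of 0 P] unfolding PS by simp
    done
  have m2: "(\<lambda>z. G (fst z 0) (snd z)) \<in> borel_measurable (S.S \<Otimes>\<^sub>M S.S)"
    apply (rule measurable_compose_countable[where f="\<lambda>u z. G u (snd z)"])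
    subgoal using meas unfolding PS by (auto intro: measurable_compose[OF measurable_snd])
    subgoal using comp0_meas[of 0 P] unfolding PS by (auto intro: measurable_compose[OF measurable_fst])
    done
  have "(\<integral>w. G (w 0) (\<lambda>t. w (Suc t)) \<partial>S.S) =
     (\<integral>w. G (w 0) (\<lambda>t. w (Suc t)) \<partial>distr (S.S \<Otimes>\<^sub>M S.S) S.S (\<lambda>(\<omega>, \<omega>'). comb_seq 1 \<omega> \<omega>'))"
    by (simp only: S.PiM_comb_seq)
  also have "\<dots> = (\<integral>z. G (fst z 0) (snd z) \<partial>(S.S \<Otimes>\<^sub>M S.S))"
    apply (subst integral_distr[OF measurable_comb_seq m1])
    by (auto simp: case_prod_beta intro!: Bochner_Integration.integral_cong)
  also have "\<dots> = (\<integral>\<omega>. (\<integral>\<omega>'. G (\<omega> 0) \<omega>' \<partial>S.S) \<partial>S.S)"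
    apply (subst SS.integral_fst'[symmetric])
    subgoal by (rule SSp.integrable_const_bound[where B=B]) (use m2 bnd in auto)
    by simp
  also have "\<dots> = (\<integral>u. (\<integral>\<omega>'. G u \<omega>' \<partial>S.S) \<partial>distr S.S (TT P) (\<lambda>\<omega>. \<omega> 0))"
    by (subst integral_distr) auto
  also have "\<dots> = (\<integral>u. (\<integral>\<omega>'. G u \<omega>' \<partial>S.S) \<partial>TT P)"
    by (subst S.PiM_component) auto
  finally show ?thesis unfolding PS .
qed

lemma traj_shift:
  "traj pols k x a w (Suc t) = traj pols (k-1) (w 0 (x,a)) (pols (k-1) (w 0 (x,a))) (\<lambda>t. w (Suc t)) t"
proof (induction t)
  case 0
  then show ?case by (cases k) (auto simp: act_def Let_def)
next
  case (Suc t)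
  show ?case
    apply (subst traj.simps(2))
    apply (subst Suc)
    by (auto simp: act_def Let_def)
qed

lemma traj_meas: "(\<lambda>w. traj pols k x a w t) \<in> measurable (path_space P) (count_space UNIV)"
proof (induction t)
  case 0
  then show ?case by simp
next
  case (Suc t)
  have "(\<lambda>w. (\<lambda>z w. (w t z, act pols k (Suc t) (w t z))) (traj pols k x a w t) w) \<in> measurable (path_space P) (count_space UNIV)"
  proof (rule measurable_compose_countable[OF _ Suc])
    fix z :: "'a \<times> 'b"
    show "(\<lambda>w. (w t z, act pols k (Suc t) (w t z))) \<in> measurable (path_space P) (count_space UNIV)"
      using measurable_compose[OF comp0_meas[of t P], of "\<lambda>u. (u z, act pols k (Suc t) (u z))" "count_space UNIV"]
      by simp
  qed
  then show ?case by (simp add: Let_def)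
qed

definition Ret :: "(nat \<Rightarrow> 'x \<Rightarrow> 'a) \<Rightarrow> ('x \<Rightarrow> 'a \<Rightarrow> real) \<Rightarrow> real \<Rightarrow> nat \<Rightarrow> 'x \<Rightarrow> 'a \<Rightarrow> (nat \<Rightarrow> ('x \<times> 'a \<Rightarrow> 'x)) \<Rightarrow> real" where
  "Ret pols r g k x a w = (\<Sum>t. g ^ t * case_prod r (traj pols k x a w t))"

lemma Ret_meas: "Ret pols r g k x a \<in> borel_measurable (path_space P)"
proof -
  have "(\<lambda>w. g ^ t * case_prod r (traj pols k x a w t)) \<in> borel_measurable (path_space P)" for t
    using measurable_compose[OF traj_meas[of pols k x a t P], of "\<lambda>z. g ^ t * case_prod r z" borel]
    by simp
  then show ?thesis unfolding Ret_def[abs_def] by (rule borel_measurable_suminf)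
qed

lemma summ:
  fixes g :: real and r :: "'x \<Rightarrow> 'a \<Rightarrow> real"
  assumes "0 \<le> g" "g < 1" "\<And>x a. \<bar>r x a\<bar> \<le> 1"
  shows "summable (\<lambda>t. g ^ t * case_prod r (f t))"
    and "summable (\<lambda>t. \<bar>g ^ t * case_prod r (f t)\<bar>)"
    and "\<bar>\<Sum>t. g ^ t * case_prod r (f t)\<bar> \<le> 1 / (1 - g)"
proof -
  have b: "\<bar>g ^ t * case_prod r (f t)\<bar> \<le> g ^ t" for t
  proof -
    have "\<bar>case_prod r (f t)\<bar> \<le> 1" using assms(3) by (cases "f t") auto
    then have "\<bar>g ^ t\<bar> * \<bar>case_prod r (f t)\<bar> \<le> g ^ t * 1"
    proof -
      have "\<bar>g ^ t\<bar> = g ^ t" using assms(1) by simp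
      moreover have "0 \<le> g ^ t" using assms(1) by simp
      ultimately show ?thesis using mult_left_mono[OF \<open>\<bar>case_prod r (f t)\<bar> \<le> 1\<close>, of "g ^ t"] by simp
    qed
    then show ?thesis by (simp add: abs_mult)
  qed
  have gs: "summable (\<lambda>t. g ^ t)" using assms by (simp add: summable_geometric)
  show s2: "summable (\<lambda>t. \<bar>g ^ t * case_prod r (f t)\<bar>)"
    by (rule summable_comparison_test[OF _ gs]) (use b in auto)
  show "summable (\<lambda>t. g ^ t * case_prod r (f t))"
    by (rule summable_comparison_test[OF _ gs]) (use b in auto)
  have "\<bar>\<Sum>t. g ^ t * case_prod r (f t)\<bar> \<le> (\<Sum>t. \<bar>g ^ t * case_prod r (f t)\<bar>)"
    by (rule summable_rabs[OF s2])
  also have "\<dots> \<le> (\<Sum>t. g ^ t)"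
    by (rule suminf_le[OF b s2 gs])
  also have "\<dots> = 1 / (1 - g)" using assms by (simp add: suminf_geometric)
  finally show "\<bar>\<Sum>t. g ^ t * case_prod r (f t)\<bar> \<le> 1 / (1 - g)" .
qed

lemma Ret_bnd:
  assumes "0 \<le> g" "g < 1" "\<And>x a. \<bar>r x a\<bar> \<le> 1"
  shows "\<bar>Ret pols r g k x a w\<bar> \<le> 1 / (1 - g)"
  unfolding Ret_def by (rule summ(3)[OF assms])

lemma Ret_rec:
  assumes "0 \<le> g" "g < 1" "\<And>x a. \<bar>r x a\<bar> \<le> 1"
  shows "Ret pols r g k x a w = r x a + g * Ret pols r g (k-1) (w 0 (x,a)) (pols (k-1) (w 0 (x,a))) (\<lambda>t. w (Suc t))"
proof -
  let ?f = "\<lambda>t. g ^ t * case_prod r (traj pols k x a w t)"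
  have s: "summable ?f" by (rule summ(1)[OF assms])
  have "Ret pols r g k x a w = ?f 0 + (\<Sum>t. ?f (Suc t))"
    unfolding Ret_def using suminf_split_head[OF s] by simp
  also have "(\<Sum>t. ?f (Suc t)) = (\<Sum>t. g * (g ^ t * case_prod r (traj pols (k-1) (w 0 (x,a)) (pols (k-1) (w 0 (x,a))) (\<lambda>t. w (Suc t)) t)))"
    by (simp only: traj_shift power_Suc mult.assoc)
  also have "\<dots> = g * Ret pols r g (k-1) (w 0 (x,a)) (pols (k-1) (w 0 (x,a))) (\<lambda>t. w (Suc t))"
    unfolding Ret_def by (rule suminf_mult[OF summ(1)[OF assms]])
  finally show ?thesis by simp
qed

lemma marg:
  fixes H :: "'x::finite \<Rightarrow> real"
  shows "(\<integral>u. H (u (x,a)) \<partial>TT P) = (\<Sum>y\<in>UNIV. pmf (P x a) y * H y)"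
proof -
  have "(\<integral>u. H (u (x,a)) \<partial>TT P) = (\<integral>y. H y \<partial>measure_pmf (map_pmf (\<lambda>u. u (x,a)) (table_pmf P)))"
    by simp
  also have "map_pmf (\<lambda>u. u (x,a)) (table_pmf P) = P x a"
    unfolding table_pmf_def by (subst Pi_pmf_component) auto
  also have "(\<integral>y. H y \<partial>measure_pmf (P x a)) = (\<Sum>y\<in>UNIV. pmf (P x a) y *\<^sub>R H y)"
    by (rule integral_measure_pmf) auto
  finally show ?thesis by simp
qed

lemma ps_prob: "prob_space (path_space P)"
proof -
  interpret S: sequence_space "TT P" by (rule seqsp)
  show ?thesis unfolding path_space_def by (rule S.P.prob_space_axioms)
qed

lemma int_bnd:
  fixes f :: "_ \<Rightarrow> real"
  assumes "f \<in> borel_measurable (path_space P)" "\<And>w. \<bar>f w\<bar> \<le> B"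
  shows "integrable (path_space P) f"
proof -
  interpret prob_space "path_space P" by (rule ps_prob)
  show ?thesis by (rule integrable_const_bound[where B=B]) (use assms in auto)
qed

lemma sum_pmf1: "(\<Sum>y\<in>(UNIV::'x::finite set). pmf p y) = 1"
  by (rule sum_pmf_eq_1) auto

definition EE where "EE P pols r g k x a = (\<integral>w. Ret pols r g k x a w \<partial>path_space P)"

lemma EE_rec:
  fixes g :: real and r :: "'x::finite \<Rightarrow> 'a::finite \<Rightarrow> real"
  assumes "0 \<le> g" "g < 1" "\<And>x a. \<bar>r x a\<bar> \<le> 1"
  shows "EE P pols r g k x a = r x a + g * (\<Sum>y\<in>UNIV. pmf (P x a) y * EE P pols r g (k-1) y (pols (k-1) y))"
proof -
  define G where "G u w' = r x a + g * Ret pols r g (k-1) (u (x,a)) (pols (k-1) (u (x,a))) w'" for u w'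
  have B: "\<bar>G u w\<bar> \<le> 1 + g * (1 / (1 - g))" for u w
  proof -
    have "\<bar>G u w\<bar> \<le> \<bar>r x a\<bar> + g * \<bar>Ret pols r g (k-1) (u (x,a)) (pols (k-1) (u (x,a))) w\<bar>"
      unfolding G_def using assms(1) by (simp add: abs_mult) (metis abs_triangle_ineq abs_mult abs_of_nonneg)
    also have "\<dots> \<le> 1 + g * (1 / (1 - g))"
      using assms Ret_bnd[OF assms] by (intro add_mono mult_left_mono) auto
    finally show ?thesis .
  qed
  have M: "G u \<in> borel_measurable (path_space P)" for u
    unfolding G_def using Ret_meas by measurable
  have "EE P pols r g k x a = (\<integral>w. G (w 0) (\<lambda>t. w (Suc t)) \<partial>path_space P)"
    unfolding EE_def G_def by (rule Bochner_Integration.integral_cong[OF refl], rule Ret_rec[OF assms])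
  also have "\<dots> = (\<integral>u. (\<integral>w. G u w \<partial>path_space P) \<partial>TT P)"
    by (rule split_int[OF M B])
  also have "\<dots> = (\<integral>u. (\<lambda>y. r x a + g * EE P pols r g (k-1) y (pols (k-1) y)) (u (x,a)) \<partial>TT P)"
  proof (rule Bochner_Integration.integral_cong[OF refl])
    fix u
    interpret prob_space "path_space P" by (rule ps_prob)
    have I: "integrable (path_space P) (Ret pols r g (k-1) (u (x,a)) (pols (k-1) (u (x,a))))"
      by (rule int_bnd[OF Ret_meas Ret_bnd[OF assms]])
    show "(\<integral>w. G u w \<partial>path_space P) = (\<lambda>y. r x a + g * EE P pols r g (k-1) y (pols (k-1) y)) (u (x,a))"
      unfolding G_def EE_def using I by (simp add: prob_space)
  qed
  also have "\<dots> = (\<Sum>y\<in>UNIV. pmf (P x a) y * (r x a + g * EE P pols r g (k-1) y (pols (k-1) y)))"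
    by (rule marg)
  also have "\<dots> = r x a * (\<Sum>y\<in>UNIV. pmf (P x a) y) + g * (\<Sum>y\<in>UNIV. pmf (P x a) y * EE P pols r g (k-1) y (pols (k-1) y))"
    by (simp add: algebra_simps sum.distrib sum_distrib_left sum_distrib_right)
  finally show ?thesis by (simp add: sum_pmf1)
qed

lemma fix_unique:
  fixes q1 q2 :: "'x::finite \<Rightarrow> 'a::finite \<Rightarrow> real" and g :: real
  assumes "0 \<le> g" "g < 1"
    and h1: "\<forall>x a. q1 x a = r x a + g * Ppol P pol q1 x a"
    and h2: "\<forall>x a. q2 x a = r x a + g * Ppol P pol q2 x a"
  shows "q1 = q2"
proof -
  define d where "d z = \<bar>q1 (fst z) (snd z) - q2 (fst z) (snd z)\<bar>" for z
  define m where "m = Max (range d)"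
  have dm: "d z \<le> m" for z unfolding m_def by (rule Max_ge) auto
  have "d z \<le> g * m" for z
  proof -
    obtain x a where z: "z = (x,a)" by (cases z)
    have e1: "q1 x a = r x a + g * (\<Sum>y\<in>UNIV. pmf (P x a) y * q1 y (pol y))"
      using h1 unfolding Ppol_def Pop_def polv_def by blast
    have e2: "q2 x a = r x a + g * (\<Sum>y\<in>UNIV. pmf (P x a) y * q2 y (pol y))"
      using h2 unfolding Ppol_def Pop_def polv_def by blast
    have "q1 x a - q2 x a = g * (\<Sum>y\<in>UNIV. pmf (P x a) y * (q1 y (pol y) - q2 y (pol y)))"
      apply (subst e1, subst e2)
      by (simp add: algebra_simps sum_subtractf)
    then have "d z = g * \<bar>\<Sum>y\<in>UNIV. pmf (P x a) y * (q1 y (pol y) - q2 y (pol y))\<bar>"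
      using assms(1) by (simp add: d_def z abs_mult)
    also have "\<bar>\<Sum>y\<in>UNIV. pmf (P x a) y * (q1 y (pol y) - q2 y (pol y))\<bar> \<le> (\<Sum>y\<in>UNIV. pmf (P x a) y * m)"
    proof -
      have "\<bar>\<Sum>y\<in>UNIV. pmf (P x a) y * (q1 y (pol y) - q2 y (pol y))\<bar> \<le> (\<Sum>y\<in>UNIV. \<bar>pmf (P x a) y * (q1 y (pol y) - q2 y (pol y))\<bar>)"
        by (rule sum_abs)
      also have "\<dots> \<le> (\<Sum>y\<in>UNIV. pmf (P x a) y * m)"
      proof (rule sum_mono)
        fix y
        have "d (y, pol y) \<le> m" by (rule dm)
        then show "\<bar>pmf (P x a) y * (q1 y (pol y) - q2 y (pol y))\<bar> \<le> pmf (P x a) y * m"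
          by (simp add: d_def abs_mult mult_left_mono)
      qed
      finally show ?thesis .
    qed
    also have "(\<Sum>y\<in>UNIV. pmf (P x a) y * m) = m"
      by (simp add: sum_distrib_right[symmetric] sum_pmf1)
    finally show ?thesis using assms(1) by (simp add: mult_left_mono)
  qed
  then have "m \<le> g * m" unfolding m_def by (intro Max.boundedI) auto
  moreover have "0 \<le> m" using order_trans[OF _ dm[of undefined]] by (simp add: d_def)
  ultimately have mm: "m \<le> g * m" "0 \<le> m" by auto
  have A1: "(1 - g) * m \<le> 0" using mm(1) by (simp add: algebra_simps)
  have A2: "0 \<le> (1 - g) * m" using mm(2) assms(2) by simp
  from A1 A2 have "(1 - g) * m = 0" by linarith
  then have "m = 0" using assms(2) by simp
  then have "d z = 0" for z using dm[of z] by (simp add: d_def)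
  then show ?thesis by (auto simp: d_def fun_eq_iff)
qed

lemma EE_qprime:
  fixes g :: real and r :: "'x::finite \<Rightarrow> 'a::finite \<Rightarrow> real"
  assumes "0 \<le> g" "g < 1" "\<And>x a. \<bar>r x a\<bar> \<le> 1"
  shows "EE P pols r g k = qprime P r g pols k"
proof (induction k)
  case 0
  have fx: "\<forall>x a. EE P pols r g 0 x a = r x a + g * Ppol P (pols 0) (EE P pols r g 0) x a"
  proof (intro allI)
    fix x a
    show "EE P pols r g 0 x a = r x a + g * Ppol P (pols 0) (EE P pols r g 0) x a"
      using EE_rec[OF assms, where P=P and pols=pols and k=0 and x=x and a=a]
      unfolding Ppol_def Pop_def polv_def diff_0_eq_0 .
  qed
  have "qpi P r g (pols 0) = EE P pols r g 0"
    unfolding qpi_def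
  proof (rule the_equality)
    show "\<forall>x a. EE P pols r g 0 x a = r x a + g * Ppol P (pols 0) (EE P pols r g 0) x a" by (rule fx)
    fix q assume "\<forall>x a. q x a = r x a + g * Ppol P (pols 0) q x a"
    then show "q = EE P pols r g 0" using fix_unique[OF assms(1,2) _ fx] by blast
  qed
  then show ?case by simp
next
  case (Suc k)
  show ?case
  proof (intro ext)
    fix x a
    show "EE P pols r g (Suc k) x a = qprime P r g pols (Suc k) x a"
      using EE_rec[OF assms, where P=P and pols=pols and k="Suc k" and x=x and a=a]
      unfolding qprime.simps Pop_def polv_def diff_Suc_1 Suc[symmetric] .
  qed
qed

lemma inner:
  fixes g :: real and r :: "'x::finite \<Rightarrow> 'a::finite \<Rightarrow> real"
  assumes "0 \<le> g" "g < 1" "\<And>x a. \<bar>r x a\<bar> \<le> 1"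
  shows "(\<integral>w. (Ret pols r g k y (pols k y) w - c)\<^sup>2 \<partial>path_space P)
     = Sigma2 P r g pols k y (pols k y) + (vprime P r g pols k y - c)\<^sup>2"
proof -
  interpret prob_space "path_space P" by (rule ps_prob)
  let ?R = "Ret pols r g k y (pols k y)"
  let ?v = "vprime P r g pols k y"
  have vq: "?v = qprime P r g pols k y (pols k y)" by (simp add: vprime_def polv_def)
  have mR: "?R \<in> borel_measurable (path_space P)" by (rule Ret_meas)
  have bR: "\<bar>?R w\<bar> \<le> 1 / (1 - g)" for w by (rule Ret_bnd[OF assms])
  have iR: "integrable (path_space P) ?R" by (rule int_bnd[OF mR bR])
  have bR2: "\<bar>(?R w - ?v)\<^sup>2\<bar> \<le> (1 / (1 - g) + \<bar>?v\<bar>)\<^sup>2" for w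
  proof -
    have "\<bar>?R w - ?v\<bar> \<le> 1 / (1 - g) + \<bar>?v\<bar>" using bR[of w] by linarith
    then have "\<bar>?R w - ?v\<bar>\<^sup>2 \<le> (1 / (1 - g) + \<bar>?v\<bar>)\<^sup>2" by (rule power_mono) simp
    then show ?thesis by simp
  qed
  have iR2: "integrable (path_space P) (\<lambda>w. (?R w - ?v)\<^sup>2)"
    by (rule int_bnd[OF _ bR2]) (use mR in measurable)
  have E: "(\<integral>w. ?R w \<partial>path_space P) = ?v"
  proof -
    have "EE P pols r g k y (pols k y) = qprime P r g pols k y (pols k y)"
      using EE_qprime[OF assms, where P=P and pols=pols and k=k] by simp
    then show ?thesis unfolding EE_def vq .
  qed
  have eq: "(\<lambda>w. (?R w - c)\<^sup>2) = (\<lambda>w. (?R w - ?v)\<^sup>2 + ((2 * (?v - c)) * ?R w + ((?v - c)\<^sup>2 - 2 * (?v - c) * ?v)))"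
    by (rule ext) (simp add: power2_eq_square algebra_simps)
  have "(\<integral>w. (?R w - c)\<^sup>2 \<partial>path_space P) = (\<integral>w. (?R w - ?v)\<^sup>2 \<partial>path_space P) + ((2 * (?v - c)) * ?v + ((?v - c)\<^sup>2 - 2 * (?v - c) * ?v))"
  proof -
    have i2: "integrable (path_space P) (\<lambda>w. (2 * (?v - c)) * ?R w + ((?v - c)\<^sup>2 - 2 * (?v - c) * ?v))"
      using iR by simp
    have "(\<integral>w. (?R w - c)\<^sup>2 \<partial>path_space P) = (\<integral>w. (?R w - ?v)\<^sup>2 \<partial>path_space P) + (\<integral>w. (2 * (?v - c)) * ?R w + ((?v - c)\<^sup>2 - 2 * (?v - c) * ?v) \<partial>path_space P)"
      unfolding eq by (rule Bochner_Integration.integral_add[OF iR2 i2])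
    also have "(\<integral>w. (2 * (?v - c)) * ?R w + ((?v - c)\<^sup>2 - 2 * (?v - c) * ?v) \<partial>path_space P)
       = (\<integral>w. (2 * (?v - c)) * ?R w \<partial>path_space P) + (\<integral>w. ((?v - c)\<^sup>2 - 2 * (?v - c) * ?v) \<partial>path_space P)"
      by (rule Bochner_Integration.integral_add) (use iR in auto)
    also have "(\<integral>w. (2 * (?v - c)) * ?R w \<partial>path_space P) = (2 * (?v - c)) * ?v"
      using E by simp
    also have "(\<integral>w. ((?v - c)\<^sup>2 - 2 * (?v - c) * ?v) \<partial>path_space P) = ((?v - c)\<^sup>2 - 2 * (?v - c) * ?v)"
      by (simp add: prob_space)
    finally show ?thesis .
  qed
  also have "(\<integral>w. (?R w - ?v)\<^sup>2 \<partial>path_space P) = Sigma2 P r g pols k y (pols k y)"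
    unfolding Sigma2_def vq Ret_def ..
  finally show ?thesis by (simp add: algebra_simps)
qed

theorem lemma23:
  fixes P :: "'x::finite \<Rightarrow> 'a::finite \<Rightarrow> 'x pmf"
    and r :: "'x \<Rightarrow> 'a \<Rightarrow> real"
    and g :: real
    and pols :: "nat \<Rightarrow> 'x \<Rightarrow> 'a"
    and K k :: nat
  assumes "0 \<le> g" "g < 1"
    and "\<And>x a. \<bar>r x a\<bar> \<le> 1"
    and "1 \<le> k" "k \<le> K"
  shows "Sigma2 P r g pols k x a =
           g\<^sup>2 * sigma2 P r g pols k x a
           + g\<^sup>2 * Ppol P (pols (k - 1)) (Sigma2 P r g pols (k - 1)) x a"
proof -
  have as: "0 \<le> g" "g < 1" "\<And>x a. \<bar>r x a\<bar> \<le> 1" using assms by auto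
  obtain j where kj: "k = Suc j" using assms(4) by (cases k) auto
  define v where "v = vprime P r g pols j"
  define c where "c = Pop P v x a"
  have qk: "qprime P r g pols k x a = r x a + g * c"
    by (simp add: kj c_def v_def vprime_def)
  define G where "G u w' = g\<^sup>2 * (Ret pols r g j (u (x,a)) (pols j (u (x,a))) w' - c)\<^sup>2" for u w'
  have M: "G u \<in> borel_measurable (path_space P)" for u
    unfolding G_def using Ret_meas by measurable
  have B: "\<bar>G u w\<bar> \<le> g\<^sup>2 * (1 / (1 - g) + \<bar>c\<bar>)\<^sup>2" for u w
  proof -
    have "\<bar>Ret pols r g j (u (x,a)) (pols j (u (x,a))) w - c\<bar> \<le> 1 / (1 - g) + \<bar>c\<bar>"
    proof -
      have "\<bar>Ret pols r g j (u (x,a)) (pols j (u (x,a))) w\<bar> \<le> 1 / (1 - g)" by (rule Ret_bnd[OF as])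
      then show ?thesis by linarith
    qed
    then have "\<bar>Ret pols r g j (u (x,a)) (pols j (u (x,a))) w - c\<bar>\<^sup>2 \<le> (1 / (1 - g) + \<bar>c\<bar>)\<^sup>2"
      by (rule power_mono) simp
    then show ?thesis unfolding G_def by (simp add: abs_mult mult_left_mono)
  qed
  have "Sigma2 P r g pols k x a = (\<integral>w. (Ret pols r g k x a w - (r x a + g * c))\<^sup>2 \<partial>path_space P)"
    unfolding Sigma2_def Ret_def qk ..
  also have "\<dots> = (\<integral>w. G (w 0) (\<lambda>t. w (Suc t)) \<partial>path_space P)"
  proof (rule Bochner_Integration.integral_cong[OF refl])
    fix w
    show "(Ret pols r g k x a w - (r x a + g * c))\<^sup>2 = G (w 0) (\<lambda>t. w (Suc t))"
    proof -
      have rr0: "Ret pols r g k x a w = r x a + g * Ret pols r g (k-1) (w 0 (x,a)) (pols (k-1) (w 0 (x,a))) (\<lambda>t. w (Suc t))"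
        by (rule Ret_rec[OF as])
      have rr: "Ret pols r g k x a w = r x a + g * Ret pols r g j (w 0 (x,a)) (pols j (w 0 (x,a))) (\<lambda>t. w (Suc t))"
        using rr0 kj by simp
      show ?thesis
      unfolding G_def rr
      by (simp add: power2_eq_square algebra_simps)
    qed
  qed
  also have "\<dots> = (\<integral>u. (\<integral>w. G u w \<partial>path_space P) \<partial>TT P)"
    by (rule split_int[OF M B])
  also have "\<dots> = (\<integral>u. (\<lambda>y. g\<^sup>2 * (Sigma2 P r g pols j y (pols j y) + (v y - c)\<^sup>2)) (u (x,a)) \<partial>TT P)"
  proof (rule Bochner_Integration.integral_cong[OF refl])
    fix u
    show "(\<integral>w. G u w \<partial>path_space P) = (\<lambda>y. g\<^sup>2 * (Sigma2 P r g pols j y (pols j y) + (v y - c)\<^sup>2)) (u (x,a))"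
    proof -
      have "(\<integral>w. (Ret pols r g j (u (x,a)) (pols j (u (x,a))) w - c)\<^sup>2 \<partial>path_space P)
        = Sigma2 P r g pols j (u (x,a)) (pols j (u (x,a))) + (vprime P r g pols j (u (x,a)) - c)\<^sup>2"
        by (rule inner[OF as])
      then show ?thesis unfolding G_def v_def by simp
    qed
  qed
  also have "\<dots> = (\<Sum>y\<in>UNIV. pmf (P x a) y * (g\<^sup>2 * (Sigma2 P r g pols j y (pols j y) + (v y - c)\<^sup>2)))"
    by (rule marg)
  also have "\<dots> = g\<^sup>2 * (\<Sum>y\<in>UNIV. pmf (P x a) y * Sigma2 P r g pols j y (pols j y))
      + g\<^sup>2 * ((\<Sum>y\<in>UNIV. pmf (P x a) y * (v y)\<^sup>2) - 2 * c * (\<Sum>y\<in>UNIV. pmf (P x a) y * v y) + c\<^sup>2 * (\<Sum>y\<in>UNIV. pmf (P x a) y))"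
    by (simp add: power2_eq_square algebra_simps sum.distrib sum_distrib_left sum_distrib_right sum_subtractf)
  also have "\<dots> = g\<^sup>2 * Ppol P (pols (k - 1)) (Sigma2 P r g pols (k - 1)) x a + g\<^sup>2 * sigma2 P r g pols k x a"
    by (simp add: Let_def sum_pmf1 kj sigma2_def Ppol_def Pop_def polv_def c_def v_def power2_eq_square)
  finally show ?thesis by simp
qed

end
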